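(* Let $\Psi := \forall x\,\gamma(x)\wedge\bigwedge_{i=1}^n\forall x\forall y\,(e_i(x,y)\to\alpha_i(x,y))\wedge\forall x\,\deg(x)\in S$, where $\gamma$ and the $\alpha_i$ are quantifier-free, each $e_i(x,y)$ is either $x=y$ or an atom $R(x,y)$ or $R(y,x)$ with $R$ binary, and $S=\bigcup_{i=1}^p S_i$ with $S_i = L(\bar v_{i,0};\bar v_{i,1},\ldots,\bar v_{i,k_i})\subseteq\mathbb{N}^{\ell}$. Let $\Psi^*$ be the conjunction of $\forall x\,\gamma(x)$, of $\bigwedge_{i=1}^n\forall x\forall y\,(e_i(x,y)\to\alpha_i(x,y))$, and of the two conditions: ($\xi$) for every element $a$, $\deg(a)\in\{\bar v_{i,0}\}\cup\{\bar v_{i,1},\ldots,\bar v_{i,k_i}\}$ for some $1\le i\le p$; ($\phi$) for every element $a$ with $\deg(a)\neq\bar v_{i,0}$ for all $1\le i\le p$, there exist an element $b$ with the same 1-type as $a$ and an index $j\in\{1,\dots,p\}$ such that $\deg(a)\in\{\bar v_{j,1},\ldots,\bar v_{j,k_j}\}$ and $\deg(b)=\bar v_{j,0}$. Then $\Psi$ has a finite model if and only if $\Psi^*$ has a finite model.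
   Context: Signature: finitely many unary and binary relation symbols plus equality. A 1-type is a maximal consistent set of atoms/negated atoms in one variable $x$ (unary atoms $U(x)$ and atoms $R(x,x)$). A 2-type is a maximal consistent set of atoms/negated atoms $R(x,y)$, $R(y,x)$ for binary $R$, together with $x\neq y$. The null type $\eta_{null}$ contains only negated atoms; all other 2-types are non-null; let $\eta_1,\ldots,\eta_\ell$ enumerate the non-null 2-types. In a structure $\mathcal{M}$, for $a\in M$, $\deg_{\mathcal{M},\eta}(a)$ is the number of $b\neq a$ such that $(a,b)$ realizes $\eta$, and $\deg(a):=(\deg_{\mathcal{M},\eta_1}(a),\ldots,\deg_{\mathcal{M},\eta_\ell}(a))\in\mathbb{N}^\ell$; $\mathcal{M}\models\forall x\,\deg(x)\in S$ means $\deg(a)\in S$ for all $a$. For vectors $\bar v_0,\ldots,\bar v_k\in\mathbb{N}^\ell$, $L(\bar v_0;\bar v_1,\ldots,\bar v_k)=\{\bar v_0+\sum_{i=1}^k n_i\bar v_i : n_i\in\mathbb{N}\}$. *)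

theory Defs
  imports Main
begin

datatype var = Vx | Vy

datatype ('u, 'b) qf =
    QTrue
  | QEq var var
  | QU 'u var
  | QR 'b var var
  | QNot "('u, 'b) qf"
  | QAnd "('u, 'b) qf" "('u, 'b) qf"
  | QOr "('u, 'b) qf" "('u, 'b) qf"

fun qf_vars :: "('u, 'b) qf \<Rightarrow> var set" where
  "qf_vars QTrue = {}"
| "qf_vars (QEq v w) = {v, w}"
| "qf_vars (QU u v) = {v}"
| "qf_vars (QR r v w) = {v, w}"
| "qf_vars (QNot f) = qf_vars f"
| "qf_vars (QAnd f g) = qf_vars f \<union> qf_vars g"
| "qf_vars (QOr f g) = qf_vars f \<union> qf_vars g"

datatype 'b guard = GEq | GFwd 'b | GBwd 'b

record ('a, 'u, 'b) struc =
  dom :: "'a set"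
  uI :: "'u \<Rightarrow> 'a \<Rightarrow> bool"
  bI :: "'b \<Rightarrow> 'a \<Rightarrow> 'a \<Rightarrow> bool"

fun qf_eval :: "('a, 'u, 'b) struc \<Rightarrow> (var \<Rightarrow> 'a) \<Rightarrow> ('u, 'b) qf \<Rightarrow> bool" where
  "qf_eval M s QTrue = True"
| "qf_eval M s (QEq v w) = (s v = s w)"
| "qf_eval M s (QU u v) = uI M u (s v)"
| "qf_eval M s (QR r v w) = bI M r (s v) (s w)"
| "qf_eval M s (QNot f) = (\<not> qf_eval M s f)"
| "qf_eval M s (QAnd f g) = (qf_eval M s f \<and> qf_eval M s g)"
| "qf_eval M s (QOr f g) = (qf_eval M s f \<or> qf_eval M s g)"

definition asg :: "'a \<Rightarrow> 'a \<Rightarrow> var \<Rightarrow> 'a" where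
  "asg a b = (\<lambda>v. if v = Vx then a else b)"

fun guard_eval :: "('a, 'u, 'b) struc \<Rightarrow> 'b guard \<Rightarrow> 'a \<Rightarrow> 'a \<Rightarrow> bool" where
  "guard_eval M GEq a b = (a = b)"
| "guard_eval M (GFwd r) a b = bI M r a b"
| "guard_eval M (GBwd r) a b = bI M r b a"

text \<open>A 2-type (for x \<noteq> y) is determined by the truth values of R(x,y), R(y,x) for each binary R.\<close>
type_synonym 'b type2 = "'b \<Rightarrow> bool \<times> bool"

definition null2 :: "'b type2" where
  "null2 = (\<lambda>_. (False, False))"

definition tp2 :: "('a, 'u, 'b) struc \<Rightarrow> 'a \<Rightarrow> 'a \<Rightarrow> 'b type2" where
  "tp2 M a b = (\<lambda>r. (bI M r a b, bI M r b a))"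

definition tp1 :: "('a, 'u, 'b) struc \<Rightarrow> 'a \<Rightarrow> ('u \<Rightarrow> bool) \<times> ('b \<Rightarrow> bool)" where
  "tp1 M a = (\<lambda>u. uI M u a, \<lambda>r. bI M r a a)"

text \<open>Vectors in N^l are represented as functions from 2-types to nat,
  indexed by the non-null 2-types (the entry at the null type is fixed to 0).\<close>
definition deg :: "('a, 'u, 'b) struc \<Rightarrow> 'a \<Rightarrow> 'b type2 \<Rightarrow> nat" where
  "deg M a = (\<lambda>\<eta>. if \<eta> = null2 then 0
                   else card {b \<in> dom M. b \<noteq> a \<and> tp2 M a b = \<eta>})"

definition linset :: "('t \<Rightarrow> nat) \<Rightarrow> ('t \<Rightarrow> nat) list \<Rightarrow> ('t \<Rightarrow> nat) set" where
  "linset v0 vs = {w. \<exists>ns :: nat list. length ns = length vs \<and>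
      w = (\<lambda>t. v0 t + (\<Sum>i<length vs. ns ! i * (vs ! i) t))}"

definition base_ok :: "('a, 'u, 'b) struc \<Rightarrow> ('u, 'b) qf \<Rightarrow> ('b guard \<times> ('u, 'b) qf) list \<Rightarrow> bool" where
  "base_ok M \<gamma> cs \<longleftrightarrow>
     (\<forall>a \<in> dom M. qf_eval M (asg a a) \<gamma>) \<and>
     (\<forall>(e, \<alpha>) \<in> set cs. \<forall>a \<in> dom M. \<forall>b \<in> dom M.
         guard_eval M e a b \<longrightarrow> qf_eval M (asg a b) \<alpha>)"

definition sat_Psi :: "('a, 'u, 'b) struc \<Rightarrow> ('u, 'b) qf \<Rightarrow> ('b guard \<times> ('u, 'b) qf) list
    \<Rightarrow> (('b type2 \<Rightarrow> nat) \<times> ('b type2 \<Rightarrow> nat) list) list \<Rightarrow> bool" where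
  "sat_Psi M \<gamma> cs Ls \<longleftrightarrow> base_ok M \<gamma> cs \<and>
     (\<forall>a \<in> dom M. deg M a \<in> (\<Union>(v0, vs) \<in> set Ls. linset v0 vs))"

definition sat_Psi_star :: "('a, 'u, 'b) struc \<Rightarrow> ('u, 'b) qf \<Rightarrow> ('b guard \<times> ('u, 'b) qf) list
    \<Rightarrow> (('b type2 \<Rightarrow> nat) \<times> ('b type2 \<Rightarrow> nat) list) list \<Rightarrow> bool" where
  "sat_Psi_star M \<gamma> cs Ls \<longleftrightarrow> base_ok M \<gamma> cs \<and>
     (\<forall>a \<in> dom M. \<exists>(v0, vs) \<in> set Ls. deg M a \<in> insert v0 (set vs)) \<and>
     (\<forall>a \<in> dom M. (\<forall>(v0, vs) \<in> set Ls. deg M a \<noteq> v0) \<longrightarrow>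
        (\<exists>b \<in> dom M. tp1 M b = tp1 M a \<and>
           (\<exists>(v0, vs) \<in> set Ls. deg M a \<in> set vs \<and> deg M b = v0)))"

text \<open>Finite models: nonempty finite domain; w.l.o.g. a subset of nat.\<close>
definition finite_struc :: "('a, 'u, 'b) struc \<Rightarrow> bool" where
  "finite_struc M \<longleftrightarrow> finite (dom M) \<and> dom M \<noteq> {}"

end

theory Submission
  imports Defs
begin


lemma qf_eval_cong:
  assumes "\<And>v w. (s v = s w) = (s' v = s' w)"
    and "\<And>u v. uI M u (s v) = uI M' u (s' v)"
    and "\<And>r v w. bI M r (s v) (s w) = bI M' r (s' v) (s' w)"
  shows "qf_eval M s f = qf_eval M' s' f"
  by (induction f) (auto simp: assms)

lemma qf_eval_asg_cong:
  assumes "(a = b) = (a' = b')"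
    and "\<And>u. uI M u a = uI M' u a'" "\<And>u. uI M u b = uI M' u b'"
    and "\<And>r. bI M r a a = bI M' r a' a'" "\<And>r. bI M r a b = bI M' r a' b'"
    and "\<And>r. bI M r b a = bI M' r b' a'" "\<And>r. bI M r b b = bI M' r b' b'"
  shows "qf_eval M (asg a b) f = qf_eval M' (asg a' b') f"
proof (rule qf_eval_cong)
  fix v w show "(asg a b v = asg a b w) = (asg a' b' v = asg a' b' w)"
    using assms(1) by (cases v; cases w) (auto simp: asg_def)
next
  fix u v show "uI M u (asg a b v) = uI M' u (asg a' b' v)"
    using assms(2,3) by (cases v) (auto simp: asg_def)
next
  fix r v w show "bI M r (asg a b v) (asg a b w) = bI M' r (asg a' b' v) (asg a' b' w)"
    using assms(4-7) by (cases v; cases w) (auto simp: asg_def)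
qed

lemma tp2_swap_null: "(tp2 M b a = null2) = (tp2 M a b = null2)"
  by (auto simp: tp2_def null2_def fun_eq_iff)

lemma tp2_nonnull: "(tp2 M a b \<noteq> null2) = (\<exists>r. bI M r a b \<or> bI M r b a)"
  by (auto simp: tp2_def null2_def fun_eq_iff)

lemma iso_preserve:
  fixes M :: "('a,'u,'b) struc" and M' :: "('c,'u,'b) struc"
  assumes bij: "bij_betw h (dom M) (dom M')"
  and U: "\<And>u a. a \<in> dom M \<Longrightarrow> uI M' u (h a) = uI M u a"
  and B: "\<And>r a b. a \<in> dom M \<Longrightarrow> b \<in> dom M \<Longrightarrow> bI M' r (h a) (h b) = bI M r a b"
  shows "sat_Psi M' \<gamma> cs Ls = sat_Psi M \<gamma> cs Ls"
    "sat_Psi_star M' \<gamma> cs Ls = sat_Psi_star M \<gamma> cs Ls"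
    "finite_struc M' = finite_struc M"
proof -
  have dom': "dom M' = h ` dom M" and inj: "inj_on h (dom M)"
    using bij by (auto simp: bij_betw_def)
  have tp2: "tp2 M' (h a) (h b) = tp2 M a b" if "a \<in> dom M" "b \<in> dom M" for a b
    using that B by (auto simp: tp2_def)
  have tp1: "tp1 M' (h a) = tp1 M a" if "a \<in> dom M" for a
    using that B U by (auto simp: tp1_def)
  have deg: "deg M' (h a) = deg M a" if a: "a \<in> dom M" for a
  proof
    fix \<eta>
    have "{y \<in> dom M'. y \<noteq> h a \<and> tp2 M' (h a) y = \<eta>} = h ` {b \<in> dom M. b \<noteq> a \<and> tp2 M a b = \<eta>}"
      using a tp2 inj unfolding dom' by (auto simp: inj_on_eq_iff)
    moreover have "card (h ` {b \<in> dom M. b \<noteq> a \<and> tp2 M a b = \<eta>}) = card {b \<in> dom M. b \<noteq> a \<and> tp2 M a b = \<eta>}"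
      by (rule card_image) (rule inj_on_subset[OF inj], auto)
    ultimately show "deg M' (h a) \<eta> = deg M a \<eta>" by (simp add: deg_def)
  qed
  have qf: "qf_eval M' (asg (h a) (h b)) f = qf_eval M (asg a b) f" if "a \<in> dom M" "b \<in> dom M" for a b f
    by (rule qf_eval_asg_cong) (use that U B inj in \<open>auto simp: inj_on_eq_iff\<close>)
  have ge: "guard_eval M' e (h a) (h b) = guard_eval M e a b" if "a \<in> dom M" "b \<in> dom M" for a b e
    using that B inj by (cases e) (auto simp: inj_on_eq_iff)
  have base: "base_ok M' \<gamma> cs = base_ok M \<gamma> cs"
    unfolding base_ok_def dom' using qf ge by (auto simp: case_prod_beta)
  show "sat_Psi M' \<gamma> cs Ls = sat_Psi M \<gamma> cs Ls"
    unfolding sat_Psi_def base dom' using deg by auto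
  show "sat_Psi_star M' \<gamma> cs Ls = sat_Psi_star M \<gamma> cs Ls"
    unfolding sat_Psi_star_def base dom' using deg tp1 by (auto 0 3)
  show "finite_struc M' = finite_struc M"
    unfolding finite_struc_def dom' using inj finite_image_iff by auto
qed

lemma to_nat:
  fixes M :: "('a,'u,'b) struc"
  assumes "finite_struc M"
  obtains M' :: "(nat,'u,'b) struc" where "finite_struc M'"
    "sat_Psi M' \<gamma> cs Ls = sat_Psi M \<gamma> cs Ls"
    "sat_Psi_star M' \<gamma> cs Ls = sat_Psi_star M \<gamma> cs Ls"
proof -
  obtain f :: "'a \<Rightarrow> nat" and n where f: "f ` dom M = {i. i < n}" "inj_on f (dom M)"
    using finite_imp_inj_to_nat_seg assms unfolding finite_struc_def by blast
  define M' :: "(nat,'u,'b) struc" where "M' = \<lparr>dom = f ` dom M,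
     uI = (\<lambda>u y. uI M u (inv_into (dom M) f y)),
     bI = (\<lambda>r y z. bI M r (inv_into (dom M) f y) (inv_into (dom M) f z))\<rparr>"
  have bij: "bij_betw f (dom M) (dom M')" using f by (auto simp: M'_def bij_betw_def)
  note I = iso_preserve[OF bij]
  have "finite_struc M' = finite_struc M" "sat_Psi M' \<gamma> cs Ls = sat_Psi M \<gamma> cs Ls"
    "sat_Psi_star M' \<gamma> cs Ls = sat_Psi_star M \<gamma> cs Ls"
    by (rule I; simp add: M'_def inv_into_f_f[OF f(2)])+
  then show ?thesis using that assms by auto
qed



lemma sum_list_map_nth: "sum_list (map f xs) = (\<Sum>c<length xs. f (xs ! c))"
  by (simp add: sum_list_sum_nth atLeast0LessThan)

lemma sum_list_concat': "sum_list (concat xss) = sum_list (map sum_list (xss :: 'a::monoid_add list list))"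
  by (induction xss) auto

lemma W_sum:
  "(\<Sum>c<length (v0 # concat (map (\<lambda>i. replicate (ns ! i) (vs ! i)) [0..<length vs])).
      ((v0 # concat (map (\<lambda>i. replicate (ns ! i) (vs ! i)) [0..<length vs])) ! c) t)
   = v0 t + (\<Sum>i<length vs. ns ! i * (vs ! i) t)"
proof -
  have "(\<Sum>c<length (v0 # concat (map (\<lambda>i. replicate (ns ! i) (vs ! i)) [0..<length vs])).
      ((v0 # concat (map (\<lambda>i. replicate (ns ! i) (vs ! i)) [0..<length vs])) ! c) t)
      = sum_list (map (\<lambda>w. w t) (v0 # concat (map (\<lambda>i. replicate (ns ! i) (vs ! i)) [0..<length vs])))"
    by (simp only: sum_list_map_nth)
  also have "\<dots> = v0 t + (\<Sum>i<length vs. ns ! i * (vs ! i) t)"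
    by (simp add: map_concat sum_list_concat' o_def sum_list_replicate sum_list_map_nth)
  finally show ?thesis .
qed

lemma W_set:
  "set (v0 # concat (map (\<lambda>i. replicate (ns ! i) (vs ! i)) [0..<length vs])) \<subseteq> insert v0 (set vs)"
  by auto

lemma split_set:
  "finite A \<Longrightarrow> card A = (\<Sum>c<(q::nat). s c) \<Longrightarrow> \<exists>f. (\<forall>x\<in>A. f x < q) \<and> (\<forall>c<q. card {x\<in>A. f x = c} = s c)"
proof (induction q arbitrary: A)
  case 0
  then show ?case by auto
next
  case (Suc q)
  obtain B where B: "B \<subseteq> A" "card B = s q" "finite B"
    using obtain_subset_with_card_n[of "s q" A] Suc.prems by auto
  have "card (A - B) = (\<Sum>c<q. s c)" using Suc.prems B by (simp add: card_Diff_subset)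
  then obtain f where f: "\<forall>x\<in>A - B. f x < q" "\<forall>c<q. card {x\<in>A - B. f x = c} = s c"
    using Suc.IH[of "A - B"] Suc.prems by auto
  define g where "g x = (if x \<in> B then q else f x)" for x
  have "\<forall>x\<in>A. g x < Suc q" using f(1) by (simp add: g_def less_Suc_eq)
  moreover have "card {x\<in>A. g x = c} = s c" if "c < Suc q" for c
  proof (cases "c = q")
    case True
    have "{x\<in>A. g x = c} = B" using f B True by (auto simp: g_def)
    then show ?thesis using B True by simp
  next
    case False
    have "{x\<in>A. g x = c} = {x\<in>A - B. f x = c}" using False by (auto simp: g_def)
    then show ?thesis using f that False by simp
  qed
  ultimately show ?case by blast
qed

lemma split_dir:
  fixes M :: "('a,'u,'b) struc"
  assumes fin: "finite_struc M" and sat: "sat_Psi M \<gamma> cs Ls"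
    and nullz: "\<forall>(v0, vs) \<in> set Ls. \<forall>v \<in> insert v0 (set vs). v null2 = 0"
  shows "\<exists>M2 :: ('a \<times> nat,'u,'b) struc. finite_struc M2 \<and> sat_Psi_star M2 \<gamma> cs Ls"
proof -
  have "\<forall>a\<in>dom M. \<exists>L ns. L \<in> set Ls \<and> length ns = length (snd L) \<and>
          deg M a = (\<lambda>t. fst L t + (\<Sum>i<length (snd L). ns ! i * (snd L ! i) t))"
  proof
    fix a assume a: "a \<in> dom M"
    then have "deg M a \<in> (\<Union>(v0, vs) \<in> set Ls. linset v0 vs)" using sat by (simp add: sat_Psi_def)
    then obtain v0 vs where vv: "(v0, vs) \<in> set Ls" "deg M a \<in> linset v0 vs" by auto
    then obtain ns where "length ns = length vs" "deg M a = (\<lambda>t. v0 t + (\<Sum>i<length vs. ns ! i * (vs ! i) t))"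
      unfolding linset_def by auto
    then show "\<exists>L ns. L \<in> set Ls \<and> length ns = length (snd L) \<and>
          deg M a = (\<lambda>t. fst L t + (\<Sum>i<length (snd L). ns ! i * (snd L ! i) t))"
      using vv by (intro exI[of _ "(v0, vs)"] exI[of _ ns]) auto
  qed
  then have "\<exists>L. \<forall>a\<in>dom M. \<exists>ns. L a \<in> set Ls \<and> length ns = length (snd (L a)) \<and>
          deg M a = (\<lambda>t. fst (L a) t + (\<Sum>i<length (snd (L a)). ns ! i * (snd (L a) ! i) t))"
    by (rule bchoice)
  then obtain L where "\<forall>a\<in>dom M. \<exists>ns. L a \<in> set Ls \<and> length ns = length (snd (L a)) \<and>
          deg M a = (\<lambda>t. fst (L a) t + (\<Sum>i<length (snd (L a)). ns ! i * (snd (L a) ! i) t))"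
    by blast
  then have "\<exists>N. \<forall>a\<in>dom M. L a \<in> set Ls \<and> length (N a) = length (snd (L a)) \<and>
          deg M a = (\<lambda>t. fst (L a) t + (\<Sum>i<length (snd (L a)). N a ! i * (snd (L a) ! i) t))"
    by (rule bchoice)
  then obtain N where "\<forall>a\<in>dom M. L a \<in> set Ls \<and> length (N a) = length (snd (L a)) \<and>
          deg M a = (\<lambda>t. fst (L a) t + (\<Sum>i<length (snd (L a)). N a ! i * (snd (L a) ! i) t))"
    by blast
  then have LN: "\<And>a. a \<in> dom M \<Longrightarrow> L a \<in> set Ls \<and> length (N a) = length (snd (L a)) \<and>
          deg M a = (\<lambda>t. fst (L a) t + (\<Sum>i<length (snd (L a)). N a ! i * (snd (L a) ! i) t))"
    by blast
  define W where "W a = fst (L a) # concat (map (\<lambda>i. replicate (N a ! i) (snd (L a) ! i)) [0..<length (snd (L a))])" for a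
  have Wsum: "(\<Sum>c<length (W a). (W a ! c) t) = deg M a t" if "a \<in> dom M" for a t
    unfolding W_def W_sum using LN[OF that] by simp
  have Wset: "W a ! c \<in> insert (fst (L a)) (set (snd (L a)))" if "c < length (W a)" for a c
    using W_set[of "fst (L a)" "N a" "snd (L a)"] that nth_mem[OF that] unfolding W_def by blast
  have W0: "W a ! 0 = fst (L a)" "0 < length (W a)" for a by (auto simp: W_def)
  have Wnull: "(W a ! c) null2 = 0" if "a \<in> dom M" "c < length (W a)" for a c
  proof -
    have "L a \<in> set Ls" using LN[OF that(1)] by simp
    obtain v0 vs where Lv: "L a = (v0, vs)" by (cases "L a")
    have "\<forall>v \<in> insert v0 (set vs). v null2 = 0" using nullz \<open>L a \<in> set Ls\<close> Lv by fastforce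
    moreover have "W a ! c \<in> insert v0 (set vs)" using Wset[OF that(2)] Lv by simp
    ultimately show ?thesis by blast
  qed
  have ex_pi: "\<exists>\<pi>. (\<forall>b\<in>dom M. b \<noteq> a \<longrightarrow> tp2 M a b \<noteq> null2 \<longrightarrow> \<pi> b < length (W a)) \<and>
           (\<forall>c<length (W a). \<forall>\<eta>. \<eta> \<noteq> null2 \<longrightarrow>
               card {b\<in>dom M. b \<noteq> a \<and> tp2 M a b = \<eta> \<and> \<pi> b = c} = (W a ! c) \<eta>)"
    if a: "a \<in> dom M" for a
  proof -
    define A where "A \<eta> = {b\<in>dom M. b \<noteq> a \<and> tp2 M a b = \<eta>}" for \<eta>
    have "\<forall>\<eta>. \<exists>f. \<eta> \<noteq> null2 \<longrightarrow> (\<forall>x\<in>A \<eta>. f x < length (W a)) \<and>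
             (\<forall>c<length (W a). card {x\<in>A \<eta>. f x = c} = (W a ! c) \<eta>)"
    proof
      fix \<eta>
      show "\<exists>f. \<eta> \<noteq> null2 \<longrightarrow> (\<forall>x\<in>A \<eta>. f x < length (W a)) \<and>
             (\<forall>c<length (W a). card {x\<in>A \<eta>. f x = c} = (W a ! c) \<eta>)"
      proof (cases "\<eta> = null2")
        case False
        have "finite (A \<eta>)" using fin by (auto simp: A_def finite_struc_def)
        moreover have "card (A \<eta>) = (\<Sum>c<length (W a). (W a ! c) \<eta>)"
          using Wsum[OF a] False by (simp add: A_def deg_def)
        ultimately show ?thesis using split_set[where A="A \<eta>" and q="length (W a)" and s="\<lambda>c. (W a ! c) \<eta>"] by blast
      qed auto
    qed
    then have "\<exists>F. \<forall>\<eta>. \<eta> \<noteq> null2 \<longrightarrow> (\<forall>x\<in>A \<eta>. F \<eta> x < length (W a)) \<and>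
             (\<forall>c<length (W a). card {x\<in>A \<eta>. F \<eta> x = c} = (W a ! c) \<eta>)"
      by (rule choice)
    then obtain F where F: "\<And>\<eta>. \<eta> \<noteq> null2 \<Longrightarrow> (\<forall>x\<in>A \<eta>. F \<eta> x < length (W a)) \<and>
             (\<forall>c<length (W a). card {x\<in>A \<eta>. F \<eta> x = c} = (W a ! c) \<eta>)"
      by blast
    define \<pi> where "\<pi> b = F (tp2 M a b) b" for b
    have "\<forall>b\<in>dom M. b \<noteq> a \<longrightarrow> tp2 M a b \<noteq> null2 \<longrightarrow> \<pi> b < length (W a)"
      using F by (auto simp: \<pi>_def A_def)
    moreover have "card {b\<in>dom M. b \<noteq> a \<and> tp2 M a b = \<eta> \<and> \<pi> b = c} = (W a ! c) \<eta>"
      if "c < length (W a)" "\<eta> \<noteq> null2" for c \<eta>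
    proof -
      have "{b\<in>dom M. b \<noteq> a \<and> tp2 M a b = \<eta> \<and> \<pi> b = c} = {x\<in>A \<eta>. F \<eta> x = c}"
        by (auto simp: A_def \<pi>_def)
      then show ?thesis using F[OF that(2)] that(1) by simp
    qed
    ultimately show ?thesis by blast
  qed
  then have "\<forall>a\<in>dom M. \<exists>\<pi>. (\<forall>b\<in>dom M. b \<noteq> a \<longrightarrow> tp2 M a b \<noteq> null2 \<longrightarrow> \<pi> b < length (W a)) \<and>
           (\<forall>c<length (W a). \<forall>\<eta>. \<eta> \<noteq> null2 \<longrightarrow>
               card {b\<in>dom M. b \<noteq> a \<and> tp2 M a b = \<eta> \<and> \<pi> b = c} = (W a ! c) \<eta>)" by blast
  then have "\<exists>Pi. \<forall>a\<in>dom M. (\<forall>b\<in>dom M. b \<noteq> a \<longrightarrow> tp2 M a b \<noteq> null2 \<longrightarrow> Pi a b < length (W a)) \<and>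
           (\<forall>c<length (W a). \<forall>\<eta>. \<eta> \<noteq> null2 \<longrightarrow>
               card {b\<in>dom M. b \<noteq> a \<and> tp2 M a b = \<eta> \<and> Pi a b = c} = (W a ! c) \<eta>)"    by (rule bchoice)
  then obtain Pi where "\<forall>a\<in>dom M. (\<forall>b\<in>dom M. b \<noteq> a \<longrightarrow> tp2 M a b \<noteq> null2 \<longrightarrow> Pi a b < length (W a)) \<and>
           (\<forall>c<length (W a). \<forall>\<eta>. \<eta> \<noteq> null2 \<longrightarrow>
               card {b\<in>dom M. b \<noteq> a \<and> tp2 M a b = \<eta> \<and> Pi a b = c} = (W a ! c) \<eta>)"
    by blast
  then have Pi1: "\<And>a b. a \<in> dom M \<Longrightarrow> b \<in> dom M \<Longrightarrow> b \<noteq> a \<Longrightarrow> tp2 M a b \<noteq> null2 \<Longrightarrow> Pi a b < length (W a)"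
    and Pi2: "\<And>a c \<eta>. a \<in> dom M \<Longrightarrow> c < length (W a) \<Longrightarrow> \<eta> \<noteq> null2 \<Longrightarrow>
               card {b\<in>dom M. b \<noteq> a \<and> tp2 M a b = \<eta> \<and> Pi a b = c} = (W a ! c) \<eta>"
    by blast+
  define M2 :: "('a \<times> nat,'u,'b) struc" where "M2 = \<lparr>dom = Sigma (dom M) (\<lambda>a. {..<length (W a)}),
     uI = (\<lambda>u p. uI M u (fst p)),
     bI = (\<lambda>r p q. if fst p = fst q then snd p = snd q \<and> bI M r (fst p) (fst p)
                   else bI M r (fst p) (fst q) \<and> Pi (fst p) (fst q) = snd p \<and> Pi (fst q) (fst p) = snd q)\<rparr>"
  have tp1: "tp1 M2 (a, c) = tp1 M a" for a c by (simp add: tp1_def M2_def)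
  have tp2ne: "tp2 M2 (a, c) (b, d) = (if Pi a b = c \<and> Pi b a = d then tp2 M a b else null2)"
    if "a \<noteq> b" for a b c d
    using that by (auto simp: tp2_def M2_def null2_def fun_eq_iff)
  have tp2eq: "tp2 M2 (a, c) (a, d) = null2" if "c \<noteq> d" for a c d
    using that by (auto simp: tp2_def M2_def null2_def fun_eq_iff)
  have deg2: "deg M2 (a, c) = W a ! c" if a: "a \<in> dom M" and c: "c < length (W a)" for a c
  proof
    fix \<eta>
    show "deg M2 (a, c) \<eta> = (W a ! c) \<eta>"
    proof (cases "\<eta> = null2")
      case True then show ?thesis using Wnull[OF a c] by (simp add: deg_def)
    next
      case False
      have "{p \<in> dom M2. p \<noteq> (a, c) \<and> tp2 M2 (a, c) p = \<eta>}
            = (\<lambda>b. (b, Pi b a)) ` {b\<in>dom M. b \<noteq> a \<and> tp2 M a b = \<eta> \<and> Pi a b = c}"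
      proof (intro equalityI subsetI)
        fix p assume p: "p \<in> {p \<in> dom M2. p \<noteq> (a, c) \<and> tp2 M2 (a, c) p = \<eta>}"
        obtain b d where bd: "p = (b, d)" by (cases p)
        have "b \<noteq> a" using p tp2eq False unfolding bd by auto
        then show "p \<in> (\<lambda>b. (b, Pi b a)) ` {b\<in>dom M. b \<noteq> a \<and> tp2 M a b = \<eta> \<and> Pi a b = c}"
          using p tp2ne[of a b c d] False unfolding bd by (auto simp: M2_def split: if_splits)
      next
        fix p assume "p \<in> (\<lambda>b. (b, Pi b a)) ` {b\<in>dom M. b \<noteq> a \<and> tp2 M a b = \<eta> \<and> Pi a b = c}"
        then obtain b where b: "p = (b, Pi b a)" "b \<in> dom M" "b \<noteq> a" "tp2 M a b = \<eta>" "Pi a b = c" by auto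
        have "tp2 M b a \<noteq> null2" using b False tp2_swap_null by metis
        then have "Pi b a < length (W b)" using Pi1[of b a] b a by auto
        then show "p \<in> {p \<in> dom M2. p \<noteq> (a, c) \<and> tp2 M2 (a, c) p = \<eta>}"
          using b tp2ne[of a b c "Pi b a"] by (auto simp: M2_def)
      qed
      moreover have "inj_on (\<lambda>b. (b, Pi b a)) X" for X by (auto simp: inj_on_def)
      ultimately show ?thesis using Pi2[OF a c False] False by (simp add: deg_def card_image)
    qed
  qed
  have local: "qf_eval M2 (asg (a, c) (b, d)) f = qf_eval M (asg a b) f"
    if "a = b \<Longrightarrow> c = d" "a \<noteq> b \<Longrightarrow> Pi a b = c \<and> Pi b a = d" for a b c d f
    by (rule qf_eval_asg_cong) (use that in \<open>auto simp: M2_def\<close>)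
  have base1: "\<forall>p\<in>dom M2. qf_eval M2 (asg p p) \<gamma>"
  proof
    fix p assume "p \<in> dom M2"
    then obtain a c where p: "p = (a, c)" "a \<in> dom M" by (auto simp: M2_def)
    show "qf_eval M2 (asg p p) \<gamma>" using sat local[of a a c c] p unfolding sat_Psi_def base_ok_def by auto
  qed
  have base2: "qf_eval M2 (asg p q) \<alpha>"
    if ea: "(e, \<alpha>) \<in> set cs" and pq: "p \<in> dom M2" "q \<in> dom M2" and g: "guard_eval M2 e p q" for e \<alpha> p q
  proof -
    obtain a c where p: "p = (a, c)" "a \<in> dom M" using pq by (auto simp: M2_def)
    obtain b d where q: "q = (b, d)" "b \<in> dom M" using pq by (auto simp: M2_def)
    have H: "guard_eval M e a b \<Longrightarrow> qf_eval M (asg a b) \<alpha>"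
      using sat ea p q unfolding sat_Psi_def base_ok_def by fastforce
    show ?thesis
    proof (cases e)
      case GEq then show ?thesis using g H local[of a b c d] p q by auto
    next
      case (GFwd r)
      have "bI M2 r (a,c) (b,d) = (if a = b then c = d \<and> bI M r a a else bI M r a b \<and> Pi a b = c \<and> Pi b a = d)"
        by (simp add: M2_def)
      then show ?thesis using g H local[of a b c d] p q GFwd by (cases "a = b") auto
    next
      case (GBwd r)
      have "bI M2 r (b,d) (a,c) = (if a = b then c = d \<and> bI M r a a else bI M r b a \<and> Pi a b = c \<and> Pi b a = d)"
        by (auto simp: M2_def)
      then show ?thesis using g H local[of a b c d] p q GBwd by (cases "a = b") auto
    qed
  qed
  have base: "base_ok M2 \<gamma> cs"
    unfolding base_ok_def using base1 base2 by blast
  have dom2: "p \<in> dom M2 \<longleftrightarrow> fst p \<in> dom M \<and> snd p < length (W (fst p))" for p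
    by (cases p) (auto simp: M2_def)
  have fin2: "finite_struc M2"
  proof -
    have "finite (dom M2)" using fin unfolding finite_struc_def by (simp add: M2_def)
    moreover obtain a where "a \<in> dom M" using fin unfolding finite_struc_def by auto
    then have "(a, 0) \<in> dom M2" using W0 dom2 by auto
    ultimately show ?thesis unfolding finite_struc_def by auto
  qed
  have xi: "\<exists>(v0, vs) \<in> set Ls. deg M2 p \<in> insert v0 (set vs)" if p: "p \<in> dom M2" for p
  proof -
    obtain a c where ac: "p = (a, c)" "a \<in> dom M" "c < length (W a)" using p dom2 by (cases p) auto
    have "deg M2 p \<in> insert (fst (L a)) (set (snd (L a)))" using deg2 ac Wset by simp
    moreover have "L a \<in> set Ls" using LN ac by blast
    ultimately show ?thesis by (cases "L a") auto
  qed
  have phi: "\<exists>q \<in> dom M2. tp1 M2 q = tp1 M2 p \<and>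
           (\<exists>(v0, vs) \<in> set Ls. deg M2 p \<in> set vs \<and> deg M2 q = v0)"
    if p: "p \<in> dom M2" and nh: "\<forall>(v0, vs) \<in> set Ls. deg M2 p \<noteq> v0" for p
  proof -
    obtain a c where ac: "p = (a, c)" "a \<in> dom M" "c < length (W a)" using p dom2 by (cases p) auto
    have La: "L a \<in> set Ls" using LN ac by blast
    have d: "deg M2 p \<in> insert (fst (L a)) (set (snd (L a)))" using deg2 ac Wset by simp
    have "deg M2 p \<noteq> fst (L a)" using nh La by (cases "L a") auto
    then have "deg M2 p \<in> set (snd (L a))" using d by simp
    moreover have "(a, 0) \<in> dom M2" "tp1 M2 (a, 0) = tp1 M2 p" "deg M2 (a, 0) = fst (L a)"
      using ac W0 dom2 tp1 deg2 by auto
    ultimately show ?thesis using La by (cases "L a") fastforce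
  qed
  have "sat_Psi_star M2 \<gamma> cs Ls"
    unfolding sat_Psi_star_def using base xi phi by blast
  then show ?thesis using fin2 by blast
qed



lemma mod_cancel: fixes a b i K :: nat assumes "a < K" "b < K" "(i + a) mod K = (i + b) mod K" shows "a = b"
proof -
  have "(a + i) mod K = (b + i) mod K" using assms(3) by (simp add: add.commute)
  then have "a mod K = b mod K" by (simp add: nat_mod_eq_iff)
  then show ?thesis using assms by simp
qed

lemma mod_cancel2: fixes a i i' K :: nat assumes "i < K" "i' < K" "(i + a) mod K = (i' + a) mod K" shows "i = i'"
  using mod_cancel[of i K i' a] assms by (simp add: add.commute)

lemma exists_i: fixes u k K :: nat assumes "u < K" "k < K" shows "\<exists>i<K. (i + u) mod K = k"
proof -
  have "((k + K - u) mod K + u) mod K = (k + K - u + u) mod K" by (simp add: mod_add_left_eq)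
  also have "\<dots> = k" using assms by simp
  finally show ?thesis using assms by (intro exI[of _ "(k + K - u) mod K"]) auto
qed

lemma modeq_diff: fixes a1 a2 b1 b2 i1 i2 K B :: nat
  assumes "(i1 + a1) mod K = (i2 + a2) mod K" "(i1 + b1) mod K = (i2 + b2) mod K"
    "a1 \<le> B" "a2 \<le> B" "b1 \<le> B" "b2 \<le> B" "2 * B < K"
  shows "int a1 - int a2 = int b1 - int b2"
proof -
  have "int (i1 + a1) mod int K = int (i2 + a2) mod int K" using assms(1) by (metis of_nat_mod)
  then have d1: "int K dvd (int i1 + int a1) - (int i2 + int a2)" by (simp add: mod_eq_dvd_iff)
  have "int (i1 + b1) mod int K = int (i2 + b2) mod int K" using assms(2) by (metis of_nat_mod)
  then have d2: "int K dvd (int i1 + int b1) - (int i2 + int b2)" by (simp add: mod_eq_dvd_iff)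
  have "int K dvd ((int a1 - int a2) - (int b1 - int b2))"
    using dvd_diff[OF d1 d2] by (simp add: algebra_simps)
  then obtain q where q: "(int a1 - int a2) - (int b1 - int b2) = int K * q" by (auto elim: dvdE)
  have "\<bar>int K * q\<bar> < int K" using assms(3-7) q[symmetric] by linarith
  then have "q = 0" 
    by (metis abs_mult abs_of_nat mult.right_neutral mult_less_cancel_left_pos not_less of_nat_0_less_iff zero_less_abs_iff abs_ge_zero order_le_less_trans gr0I mult_strict_left_mono zero_less_mult_iff linorder_not_le mult_le_cancel_left1 not_one_le_zero int_one_le_iff_zero_less)
  then show ?thesis using q by simp
qed

definition g :: "nat \<Rightarrow> nat" where "g n = (if n = 0 then 0 else 3 ^ n)"

lemma g_smono: "strict_mono g"
  unfolding strict_mono_Suc_iff by (auto simp: g_def)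

lemma g_double: "n > 0 \<Longrightarrow> 2 * g (n - 1) < g n"
  by (cases n) (auto simp: g_def)

lemma g_key: assumes "p' < p" shows "g (p - 1) < g p - g p'" "g p' < g p"
proof -
  have "g p' \<le> g (p - 1)" using assms g_smono by (simp add: strict_mono_less_eq)
  moreover have "2 * g (p - 1) < g p" using g_double assms by simp
  ultimately show "g (p - 1) < g p - g p'" by linarith
  show "g p' < g p" using assms g_smono by (simp add: strict_mono_less)
qed

lemma sidon_pos:
  assumes "p2 < p1" "int (g p1) - int (g p2) = int (g q1) - int (g q2)"
  shows "p1 = q1 \<and> p2 = q2"
proof -
  have "g p2 < g p1" using g_key(2)[OF assms(1)] .
  then have "g q2 < g q1" using assms(2) by linarith
  then have q: "q2 < q1" using g_smono by (simp add: strict_mono_less)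
  have "\<not> p1 < q1"
  proof
    assume "p1 < q1"
    then have "g p1 \<le> g (q1 - 1)" using g_smono by (simp add: strict_mono_less_eq)
    moreover have "g (q1 - 1) < g q1 - g q2" using g_key(1)[OF q] .
    ultimately show False using assms(2) \<open>g q2 < g q1\<close> by linarith
  qed
  moreover have "\<not> q1 < p1"
  proof
    assume "q1 < p1"
    then have "g q1 \<le> g (p1 - 1)" using g_smono by (simp add: strict_mono_less_eq)
    moreover have "g (p1 - 1) < g p1 - g p2" using g_key(1)[OF assms(1)] .
    ultimately show False using assms(2) \<open>g p2 < g p1\<close> by linarith
  qed
  ultimately have "p1 = q1" by simp
  then have "g p2 = g q2" using assms(2) by simp
  then show ?thesis using \<open>p1 = q1\<close> g_smono by (simp add: strict_mono_eq)
qed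

lemma sidon:
  assumes "p1 \<noteq> p2" "int (g p1) - int (g p2) = int (g q1) - int (g q2)"
  shows "p1 = q1 \<and> p2 = q2"
proof (cases "p2 < p1")
  case True then show ?thesis using sidon_pos assms by blast
next
  case False
  then have "p1 < p2" using assms(1) by simp
  moreover have "int (g p2) - int (g p1) = int (g q2) - int (g q1)" using assms(2) by linarith
  ultimately show ?thesis using sidon_pos by blast
qed

lemma g_le: "n \<le> N \<Longrightarrow> g n \<le> 3 ^ N"
  by (auto simp: g_def)

lemma linset_base: "v0 \<in> linset v0 vs"
  unfolding linset_def by (intro CollectI exI[of _ "replicate (length vs) 0"]) auto

lemma linset_add:
  assumes "w \<in> linset v0 vs" "v \<in> set vs"
  shows "(\<lambda>t. w t + n * v t) \<in> linset v0 vs"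
proof -
  obtain ns where ns: "length ns = length vs" "w = (\<lambda>t. v0 t + (\<Sum>i<length vs. ns ! i * (vs ! i) t))"
    using assms(1) unfolding linset_def by auto
  obtain i where i: "i < length vs" "vs ! i = v" using assms(2) by (auto simp: in_set_conv_nth)
  define ns' where "ns' = ns[i := ns ! i + n]"
  have "(\<Sum>i'<length vs. ns' ! i' * (vs ! i') t) = (\<Sum>i'<length vs. ns ! i' * (vs ! i') t + (if i' = i then n * (vs ! i') t else 0))" for t
    by (rule sum.cong) (auto simp: ns'_def ns(1) nth_list_update algebra_simps)
  also have "\<dots> t = (\<Sum>i'<length vs. ns ! i' * (vs ! i') t) + n * v t" for t
    using i by (simp add: sum.distrib)
  finally have "(\<lambda>t. w t + n * v t) = (\<lambda>t. v0 t + (\<Sum>i'<length vs. ns' ! i' * (vs ! i') t))"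
    using ns by (auto simp: fun_eq_iff)
  moreover have "length ns' = length vs" using ns by (simp add: ns'_def)
  ultimately show ?thesis unfolding linset_def by blast
qed

lemma linset_sum:
  assumes "finite X" "\<forall>x\<in>X. f x \<in> set vs"
  shows "(\<lambda>t. v0 t + (\<Sum>x\<in>X. P * f x t)) \<in> linset v0 vs"
  using assms
proof (induction X rule: finite_induct)
  case empty then show ?case using linset_base by simp
next
  case (insert x F)
  have "(\<lambda>t. (v0 t + (\<Sum>x\<in>F. P * f x t)) + P * f x t) \<in> linset v0 vs"
    using insert by (intro linset_add) auto
  then show ?case using insert by (simp add: add.commute add.left_commute)
qed

locale merge =
  fixes M :: "('a,'u,'b) struc" and Ls :: "(('b type2 \<Rightarrow> nat) \<times> ('b type2 \<Rightarrow> nat) list) list"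
    and H :: "'a set" and bh :: "'a \<Rightarrow> 'a" and jj :: "'a \<Rightarrow> nat" and idx :: "'a \<Rightarrow> nat" and m :: nat
  assumes finM: "finite (dom M)"
    and H_def: "H = {a \<in> dom M. \<exists>(v0, vs)\<in>set Ls. deg M a = v0}"
    and bh: "\<And>a. a \<in> dom M - H \<Longrightarrow> bh a \<in> H \<and> tp1 M (bh a) = tp1 M a \<and> jj a < length Ls \<and>
               deg M a \<in> set (snd (Ls ! jj a)) \<and> deg M (bh a) = fst (Ls ! jj a)"
    and idx_inj: "inj_on idx (dom M - H)" and idx_lt: "\<And>a. a \<in> dom M - H \<Longrightarrow> idx a < m"
begin

definition "P = length Ls"
definition K :: nat where "K = 2 * 3 ^ (m * P) + 1"
definition "cd x l = (if x \<in> H then 0 else idx x * P + l + 1)"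
definition "C = {..<K} \<times> {..<P}"
definition "node p = (case p of (x, i, l) \<Rightarrow>
   if x \<in> H then (x, (i, l)) else (bh x, ((i + g (cd x l)) mod K, jj x)))"

lemma node_simp: "node (x, i, l) = (if x \<in> H then (x, (i, l)) else (bh x, ((i + g (cd x l)) mod K, jj x)))"
  by (simp add: node_def)

lemma H_sub: "H \<subseteq> dom M" using H_def by auto

lemma cd_bound: assumes "x \<in> dom M" "l < P" shows "cd x l \<le> m * P"
proof (cases "x \<in> H")
  case False
  then have "idx x + 1 \<le> m" using idx_lt assms by (simp add: Suc_le_eq)
  then have "(idx x + 1) * P \<le> m * P" by (rule mult_le_mono1)
  then show ?thesis using False assms by (simp add: cd_def algebra_simps)
qed (simp add: cd_def)

lemma g_cd_le: "x \<in> dom M \<Longrightarrow> l < P \<Longrightarrow> g (cd x l) \<le> 3 ^ (m * P)"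
  using cd_bound g_le by blast

lemma K_big: "2 * 3 ^ (m * P) < K" by (simp add: K_def)

lemma g_cd_lt: "x \<in> dom M \<Longrightarrow> l < P \<Longrightarrow> g (cd x l) < K"
proof -
  assume "x \<in> dom M" "l < P"
  then have "g (cd x l) \<le> 3 ^ (m * P)" by (rule g_cd_le)
  then show ?thesis using K_big by linarith
qed

lemma cd0: "(cd x l = 0) = (x \<in> H)" by (simp add: cd_def)

lemma g_cd0: "(g (cd x l) = 0) = (x \<in> H)" by (simp add: cd_def g_def)

lemma cd_inj: assumes "x \<notin> H" "y \<notin> H" "l < P" "l' < P" "cd x l = cd y l'" "x \<in> dom M" "y \<in> dom M"
  shows "x = y \<and> l = l'"
proof -
  have e: "idx x * P + l = idx y * P + l'" using assms by (simp add: cd_def)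
  have "(idx x * P + l) div P = idx x" "(idx y * P + l') div P = idx y" using assms(3,4) by auto
  then have "idx x = idx y" using e by simp
  then have "x = y" using idx_inj assms by (auto dest: inj_onD)
  then show ?thesis using e by simp
qed

lemma member_mod: assumes "i < K" "node (x, i, l) = N" shows "(i + g (cd x l)) mod K = fst (snd N)"
  using assms by (auto simp: node_simp cd_def g_def split: if_splits)

lemma node_in: assumes "x \<in> dom M" "c \<in> C" shows "node (x, c) \<in> H \<times> C"
proof -
  obtain i l where c: "c = (i, l)" by (cases c)
  have "K > 0" by (simp add: K_def)
  then show ?thesis using assms bh[of x] by (auto simp: c node_simp C_def P_def)
qed

lemma node_hub: "b \<in> H \<Longrightarrow> node (b, c) = (b, c)"
  by (cases c) (simp add: node_simp)

lemma same_copy: assumes "x \<in> dom M" "y \<in> dom M" "c \<in> C" "node (x, c) = node (y, c)" shows "x = y"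
proof -
  obtain i l where c: "c = (i, l)" and il: "i < K" "l < P" using assms(3) by (cases c) (auto simp: C_def)
  have mx: "(i + g (cd x l)) mod K = (i + g (cd y l)) mod K"
    using member_mod[OF il(1) refl, of x l] member_mod[OF il(1) refl, of y l] assms(4) c by simp
  then have "g (cd x l) = g (cd y l)" using mod_cancel g_cd_lt assms(1,2) il by blast
  show ?thesis
  proof (cases "x \<in> H")
    case True
    then have "y \<in> H" using \<open>g (cd x l) = g (cd y l)\<close> g_cd0 by metis
    then show ?thesis using True assms(4) c by (simp add: node_simp)
  next
    case False
    then have "y \<notin> H" using \<open>g (cd x l) = g (cd y l)\<close> g_cd0 by metis
    have "cd x l = cd y l" using \<open>g (cd x l) = g (cd y l)\<close> g_smono by (simp add: strict_mono_eq)
    then show ?thesis using cd_inj False \<open>y \<notin> H\<close> il assms(1,2) by blast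
  qed
qed

lemma two_copies:
  assumes xy: "x1 \<in> dom M" "x2 \<in> dom M" "y1 \<in> dom M" "y2 \<in> dom M"
    and cc: "c1 \<in> C" "c2 \<in> C" "c1 \<noteq> c2"
    and e1: "node (x1, c1) = node (x2, c2)" and e2: "node (y1, c1) = node (y2, c2)"
  shows "node (x1, c1) = node (y1, c1)"
proof -
  obtain i1 l1 where c1: "c1 = (i1, l1)" "i1 < K" "l1 < P" using cc(1) by (cases c1) (auto simp: C_def)
  obtain i2 l2 where c2: "c2 = (i2, l2)" "i2 < K" "l2 < P" using cc(2) by (cases c2) (auto simp: C_def)
  define p1 where "p1 = cd x1 l1"
  define p2 where "p2 = cd x2 l2"
  define q1 where "q1 = cd y1 l1"
  define q2 where "q2 = cd y2 l2"
  have m1: "(i1 + g p1) mod K = (i2 + g p2) mod K"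
    using member_mod[OF c1(2) refl, of x1 l1] member_mod[OF c2(2) refl, of x2 l2] e1 c1 c2 p1_def p2_def by simp
  have m2: "(i1 + g q1) mod K = (i2 + g q2) mod K"
    using member_mod[OF c1(2) refl, of y1 l1] member_mod[OF c2(2) refl, of y2 l2] e2 c1 c2 q1_def q2_def by simp
  have bnd: "g p1 \<le> 3 ^ (m * P)" "g p2 \<le> 3 ^ (m * P)" "g q1 \<le> 3 ^ (m * P)" "g q2 \<le> 3 ^ (m * P)"
    using g_cd_le xy c1 c2 p1_def p2_def q1_def q2_def by auto
  have diff: "int (g p1) - int (g p2) = int (g q1) - int (g q2)"
    by (rule modeq_diff[OF m1 m2 bnd K_big])
  show ?thesis
  proof (cases "p1 = p2")
    case True
    then have "i1 = i2" using m1 mod_cancel2 c1 c2 by blast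
    show ?thesis
    proof (cases "p1 = 0")
      case True
      then have "cd x1 l1 = 0" "cd x2 l2 = 0" using \<open>p1 = p2\<close> p1_def p2_def by auto
      then have "x1 \<in> H" "x2 \<in> H" using cd0 by auto
      then have "c1 = c2" using e1 node_hub by simp
      then show ?thesis using cc by simp
    next
      case False
      then have "cd x1 l1 \<noteq> 0" "cd x2 l2 \<noteq> 0" using \<open>p1 = p2\<close> p1_def p2_def by auto
      then have "x1 \<notin> H" "x2 \<notin> H" using cd0 by auto
      then have "l1 = l2" using cd_inj[of x1 x2 l1 l2] \<open>p1 = p2\<close> p1_def p2_def c1 c2 xy by blast
      then have "c1 = c2" using \<open>i1 = i2\<close> c1 c2 by simp
      then show ?thesis using cc by simp
    qed
  next
    case False
    then have pq: "p1 = q1" "p2 = q2" using sidon diff by blast+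
    show ?thesis
    proof (cases "p1 = 0")
      case False
      then have "cd x1 l1 \<noteq> 0" "cd y1 l1 \<noteq> 0" using pq p1_def q1_def by auto
      then have "x1 \<notin> H" "y1 \<notin> H" using cd0 by auto
      then have "x1 = y1" using cd_inj[of x1 y1 l1 l1] pq p1_def q1_def c1 xy by blast
      then show ?thesis by simp
    next
      case True
      then have "p2 \<noteq> 0" using \<open>p1 \<noteq> p2\<close> by simp
      then have "cd x2 l2 \<noteq> 0" "cd y2 l2 \<noteq> 0" using pq p2_def q2_def by auto
      then have "x2 \<notin> H" "y2 \<notin> H" using cd0 by auto
      then have "x2 = y2" using cd_inj[of x2 y2 l2 l2] pq p2_def q2_def c2 xy by blast
      then show ?thesis using e1 e2 by simp
    qed
  qed
qed

definition M3 :: "('a \<times> nat \<times> nat, 'u, 'b) struc" where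
  "M3 = \<lparr>dom = H \<times> C, uI = (\<lambda>u N. uI M u (fst N)),
     bI = (\<lambda>r N N'. \<exists>x\<in>dom M. \<exists>y\<in>dom M. \<exists>c\<in>C. node (x, c) = N \<and> node (y, c) = N' \<and> bI M r x y)\<rparr>"

lemma tp1_member: assumes "x \<in> dom M" shows "tp1 M (fst (node (x, c))) = tp1 M x"
proof -
  obtain i l where c: "c = (i, l)" by (cases c)
  show ?thesis using assms bh[of x] by (auto simp: c node_simp)
qed

lemma uI_member: "x \<in> dom M \<Longrightarrow> uI M u (fst (node (x, c))) = uI M u x"
  using tp1_member[of x c] by (auto simp: tp1_def fun_eq_iff)

lemma loop_member: "x \<in> dom M \<Longrightarrow> bI M r (fst (node (x, c))) (fst (node (x, c))) = bI M r x x"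
  using tp1_member[of x c] by (auto simp: tp1_def fun_eq_iff)

lemma bI3: assumes "x \<in> dom M" "y \<in> dom M" "c \<in> C"
  shows "bI M3 r (node (x, c)) (node (y, c)) = bI M r x y"
proof
  assume "bI M r x y" then show "bI M3 r (node (x, c)) (node (y, c))" using assms by (auto simp: M3_def)
next
  assume "bI M3 r (node (x, c)) (node (y, c))"
  then obtain x' y' c' where w: "x' \<in> dom M" "y' \<in> dom M" "c' \<in> C" "node (x', c') = node (x, c)"
    "node (y', c') = node (y, c)" "bI M r x' y'" by (auto simp: M3_def)
  show "bI M r x y"
  proof (cases "c' = c")
    case True
    then have "x' = x" "y' = y" using same_copy w assms by blast+
    then show ?thesis using w by simp
  next
    case False
    have "node (x', c') = node (y', c')" using two_copies[of x' x y' y c' c] w assms False by blast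
    then have "x' = y'" using same_copy w by blast
    have "node (x, c) = node (y, c)" using \<open>node (x', c') = node (y', c')\<close> w by simp
    then have "x = y" using same_copy assms by blast
    have "bI M r (fst (node (x', c'))) (fst (node (x', c'))) = bI M r x' x'" using loop_member w by blast
    moreover have "bI M r (fst (node (x, c))) (fst (node (x, c))) = bI M r x x" using loop_member assms by blast
    ultimately show ?thesis using w \<open>x' = y'\<close> \<open>x = y\<close> by simp
  qed
qed

lemma tp2_3: "x \<in> dom M \<Longrightarrow> y \<in> dom M \<Longrightarrow> c \<in> C \<Longrightarrow> tp2 M3 (node (x, c)) (node (y, c)) = tp2 M x y"
  by (simp add: tp2_def bI3)

lemma local3: assumes "x \<in> dom M" "y \<in> dom M" "c \<in> C"
  shows "qf_eval M3 (asg (node (x, c)) (node (y, c))) f = qf_eval M (asg x y) f"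
proof (rule qf_eval_asg_cong)
  show "(node (x, c) = node (y, c)) = (x = y)" using same_copy assms by blast
qed (use assms bI3 uI_member in \<open>auto simp: M3_def\<close>)

lemma base3: assumes "base_ok M \<gamma> cs" shows "base_ok M3 \<gamma> cs"
proof -
  have hubn: "N = node (fst N, snd N)" "fst N \<in> dom M" "snd N \<in> C" if "N \<in> dom M3" for N
    using that node_hub H_sub by (auto simp: M3_def)
  have 1: "qf_eval M3 (asg N N) \<gamma>" if "N \<in> dom M3" for N
    using local3[of "fst N" "fst N" "snd N" \<gamma>] hubn[OF that] assms unfolding base_ok_def by metis
  have 2: "qf_eval M3 (asg N N') \<alpha>"
    if ea: "(e, \<alpha>) \<in> set cs" and NN: "N \<in> dom M3" "N' \<in> dom M3" and gd: "guard_eval M3 e N N'" for e \<alpha> N N'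
  proof -
    have H: "\<And>x y. x \<in> dom M \<Longrightarrow> y \<in> dom M \<Longrightarrow> guard_eval M e x y \<Longrightarrow> qf_eval M (asg x y) \<alpha>"
      using assms ea unfolding base_ok_def by fastforce
    show ?thesis
    proof (cases e)
      case GEq
      then have "N = N'" using gd by simp
      then show ?thesis using local3[of "fst N" "fst N" "snd N" \<alpha>] hubn[OF NN(1)] H[of "fst N" "fst N"] GEq by simp
    next
      case (GFwd r)
      then obtain x y c where w: "x \<in> dom M" "y \<in> dom M" "c \<in> C" "node (x, c) = N" "node (y, c) = N'" "bI M r x y"
        using gd by (auto simp: M3_def)
      then show ?thesis using local3[of x y c \<alpha>] H[of x y] GFwd by simp
    next
      case (GBwd r)
      then obtain x y c where w: "x \<in> dom M" "y \<in> dom M" "c \<in> C" "node (x, c) = N'" "node (y, c) = N" "bI M r x y"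
        using gd by (auto simp: M3_def)
      then show ?thesis using local3[of y x c \<alpha>] H[of y x] GBwd by simp
    qed
  qed
  show ?thesis unfolding base_ok_def using 1 2 by blast
qed

definition "X N = {x \<in> dom M - H. bh x = fst N \<and> jj x = snd (snd N)}"

lemma deg3_count:
  assumes N: "N \<in> H \<times> C" and eta: "\<eta> \<noteq> null2"
  shows "deg M3 N \<eta> = (\<Sum>p\<in>{p \<in> dom M \<times> C. node p = N}. deg M (fst p) \<eta>)"
proof -
  define mem where "mem = {p \<in> dom M \<times> C. node p = N}"
  define S where "S = {N' \<in> dom M3. N' \<noteq> N \<and> tp2 M3 N N' = \<eta>}"
  define T where "T = Sigma mem (\<lambda>p. {y \<in> dom M. y \<noteq> fst p \<and> tp2 M (fst p) y = \<eta>})"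
  define \<phi> where "\<phi> q = node (snd q, snd (fst q))" for q :: "('a \<times> nat \<times> nat) \<times> 'a"
  have finC: "finite C" by (simp add: C_def)
  have finmem: "finite mem" unfolding mem_def using finM finC by (auto intro: finite_subset[of _ "dom M \<times> C"])
  have "bij_betw \<phi> T S"
  proof (rule bij_betw_imageI)
    show "inj_on \<phi> T"
    proof (rule inj_onI)
      fix q1 q2 assume q: "q1 \<in> T" "q2 \<in> T" "\<phi> q1 = \<phi> q2"
      obtain x1 c1 y1 where q1: "q1 = ((x1, c1), y1)" by (cases q1) auto
      obtain x2 c2 y2 where q2: "q2 = ((x2, c2), y2)" by (cases q2) auto
      have h: "x1 \<in> dom M" "c1 \<in> C" "node (x1, c1) = N" "y1 \<in> dom M" "y1 \<noteq> x1"
              "x2 \<in> dom M" "c2 \<in> C" "node (x2, c2) = N" "y2 \<in> dom M" "y2 \<noteq> x2"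
        using q q1 q2 by (auto simp: T_def mem_def)
      have ny: "node (y1, c1) = node (y2, c2)" using q(3) q1 q2 by (simp add: \<phi>_def)
      show "q1 = q2"
      proof (cases "c1 = c2")
        case True
        then have "x1 = x2" using same_copy h by metis
        moreover have "y1 = y2" using same_copy h ny True by metis
        ultimately show ?thesis using q1 q2 True by simp
      next
        case False
        have "node (x1, c1) = node (y1, c1)" using two_copies[of x1 x2 y1 y2 c1 c2] h ny False by simp
        then have "x1 = y1" using same_copy h by metis
        then show ?thesis using h by simp
      qed
    qed
  next
    show "\<phi> ` T = S"
    proof (intro equalityI subsetI)
      fix N' assume "N' \<in> \<phi> ` T"
      then obtain x c y where h: "x \<in> dom M" "c \<in> C" "node (x, c) = N" "y \<in> dom M" "y \<noteq> x"
        "tp2 M x y = \<eta>" "N' = node (y, c)" by (auto simp: T_def mem_def \<phi>_def)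
      have "N' \<in> dom M3" using node_in h by (simp add: M3_def)
      moreover have "N' \<noteq> N" using same_copy h by metis
      moreover have "tp2 M3 N N' = \<eta>" using tp2_3 h by metis
      ultimately show "N' \<in> S" by (simp add: S_def)
    next
      fix N' assume "N' \<in> S"
      then have N': "N' \<in> dom M3" "N' \<noteq> N" "tp2 M3 N N' = \<eta>" by (auto simp: S_def)
      then have "\<exists>r. bI M3 r N N' \<or> bI M3 r N' N" using eta tp2_nonnull by metis
      then obtain x y c where h: "x \<in> dom M" "y \<in> dom M" "c \<in> C" "node (x, c) = N" "node (y, c) = N'"
        by (auto simp: M3_def)
      have "y \<noteq> x" using h N' by auto
      moreover have "tp2 M x y = \<eta>" using tp2_3 h N' by metis
      ultimately have "((x, c), y) \<in> T" using h by (auto simp: T_def mem_def)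
      moreover have "\<phi> ((x, c), y) = N'" using h by (simp add: \<phi>_def)
      ultimately show "N' \<in> \<phi> ` T" by force
    qed
  qed
  then have "card S = card T" by (rule bij_betw_same_card[symmetric])
  also have "card T = (\<Sum>p\<in>mem. card {y \<in> dom M. y \<noteq> fst p \<and> tp2 M (fst p) y = \<eta>})"
    unfolding T_def using finmem finM by (intro card_SigmaI) auto
  also have "\<dots> = (\<Sum>p\<in>mem. deg M (fst p) \<eta>)" using eta by (simp add: deg_def)
  finally show ?thesis using eta by (simp add: deg_def S_def mem_def)
qed

lemma deg3_sum:
  assumes N: "N \<in> H \<times> C"
  shows "(\<Sum>p\<in>{p \<in> dom M \<times> C. node p = N}. deg M (fst p) \<eta>) = deg M (fst N) \<eta> + (\<Sum>x\<in>X N. P * deg M x \<eta>)"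
proof -
  define mem where "mem = {p \<in> dom M \<times> C. node p = N}"
  define mem' where "mem' = {p \<in> dom M \<times> C. node p = N \<and> fst p \<notin> H}"
  have finC: "finite C" by (simp add: C_def)
  have finmem: "finite mem" unfolding mem_def using finM finC by (auto intro: finite_subset[of _ "dom M \<times> C"])
  have Nin: "N \<in> mem" using N node_hub H_sub by (auto simp: mem_def)
  have memeq: "mem = insert N mem'"
  proof (intro equalityI subsetI)
    fix p assume p: "p \<in> mem"
    show "p \<in> insert N mem'"
    proof (cases "fst p \<in> H")
      case True then have "node p = p" using node_hub[of "fst p" "snd p"] by simp
      then show ?thesis using p by (simp add: mem_def)
    next
      case False then show ?thesis using p by (simp add: mem_def mem'_def)
    qed
  qed (use Nin in \<open>auto simp: mem_def mem'_def\<close>)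
  have Nnot: "N \<notin> mem'" using N by (auto simp: mem'_def)
  obtain b k j where Nb: "N = (b, k, j)" "b \<in> H" "k < K" "j < P" using N by (auto simp: C_def)
  have bij: "bij_betw (\<lambda>p. (fst p, snd (snd p))) mem' (X N \<times> {..<P})"
  proof (rule bij_betw_imageI)
    show "inj_on (\<lambda>p. (fst p, snd (snd p))) mem'"
    proof (rule inj_onI)
      fix p1 p2 assume pp: "p1 \<in> mem'" "p2 \<in> mem'" "(fst p1, snd (snd p1)) = (fst p2, snd (snd p2))"
      obtain x i1 l where p1: "p1 = (x, i1, l)" by (cases p1) auto
      obtain i2 where p2: "p2 = (x, i2, l)" using pp(3) p1 by (cases p2) auto
      have "i1 < K" "i2 < K" using pp p1 p2 by (auto simp: mem'_def C_def)
      have "(i1 + g (cd x l)) mod K = fst (snd N)" "(i2 + g (cd x l)) mod K = fst (snd N)"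
        using member_mod \<open>i1 < K\<close> \<open>i2 < K\<close> pp p1 p2 by (auto simp: mem'_def)
      then have "i1 = i2" using mod_cancel2 \<open>i1 < K\<close> \<open>i2 < K\<close> by metis
      then show "p1 = p2" using p1 p2 by simp
    qed
  next
    show "(\<lambda>p. (fst p, snd (snd p))) ` mem' = X N \<times> {..<P}"
    proof (intro equalityI subsetI)
      fix q assume "q \<in> (\<lambda>p. (fst p, snd (snd p))) ` mem'"
      then obtain x i l where h: "q = (x, l)" "x \<in> dom M" "i < K" "l < P" "node (x, i, l) = N" "x \<notin> H"
        by (auto simp: mem'_def C_def)
      then show "q \<in> X N \<times> {..<P}" using h by (auto simp: X_def node_simp)
    next
      fix q assume "q \<in> X N \<times> {..<P}"
      then obtain x l where h: "q = (x, l)" "x \<in> dom M" "x \<notin> H" "bh x = b" "jj x = j" "l < P"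
        by (auto simp: X_def Nb)
      obtain i where i: "i < K" "(i + g (cd x l)) mod K = k"
        using exists_i[OF g_cd_lt[OF h(2) h(6)] Nb(3)] by blast
      have "node (x, i, l) = N" using h i Nb by (simp add: node_simp)
      then have "(x, i, l) \<in> mem'" using h i by (simp add: mem'_def C_def)
      then show "q \<in> (\<lambda>p. (fst p, snd (snd p))) ` mem'" using h by force
    qed
  qed
  have "(\<Sum>p\<in>mem'. deg M (fst p) \<eta>) = (\<Sum>q\<in>X N \<times> {..<P}. deg M (fst q) \<eta>)"
    using sum.reindex_bij_betw[OF bij, of "\<lambda>q. deg M (fst q) \<eta>"] by simp
  also have "\<dots> = (\<Sum>x\<in>X N. P * deg M x \<eta>)"
    using sum.cartesian_product[where g="\<lambda>x l. deg M x \<eta>" and B="{..<P}" and A="X N"]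
    by (simp add: case_prod_beta)
  finally have "(\<Sum>p\<in>mem'. deg M (fst p) \<eta>) = (\<Sum>x\<in>X N. P * deg M x \<eta>)" .
  moreover have "finite mem'" using finmem memeq by auto
  ultimately show ?thesis unfolding mem_def[symmetric] memeq using Nnot by simp
qed

lemma deg3_fun: assumes "N \<in> H \<times> C"
  shows "deg M3 N = (\<lambda>\<eta>. deg M (fst N) \<eta> + (\<Sum>x\<in>X N. P * deg M x \<eta>))"
proof
  fix \<eta> show "deg M3 N \<eta> = deg M (fst N) \<eta> + (\<Sum>x\<in>X N. P * deg M x \<eta>)"
  proof (cases "\<eta> = null2")
    case True then show ?thesis by (simp add: deg_def)
  next
    case False then show ?thesis using deg3_count[OF assms False] deg3_sum[OF assms] by simp
  qed
qed

lemma deg3_linset: assumes N: "N \<in> H \<times> C"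
  shows "deg M3 N \<in> (\<Union>(v0, vs) \<in> set Ls. linset v0 vs)"
proof (cases "X N = {}")
  case True
  have "fst N \<in> H" using N by auto
  then obtain v0 vs where "(v0, vs) \<in> set Ls" "deg M (fst N) = v0" using H_def by auto
  moreover have "deg M3 N = deg M (fst N)" using deg3_fun[OF N] True by simp
  ultimately show ?thesis using linset_base by fastforce
next
  case False
  then obtain x0 where x0: "x0 \<in> X N" by auto
  define j where "j = snd (snd N)"
  have x0p: "x0 \<in> dom M - H" "bh x0 = fst N" "jj x0 = j" using x0 by (auto simp: X_def j_def)
  have jl: "j < length Ls" using bh[OF x0p(1)] x0p by simp
  have v0: "deg M (fst N) = fst (Ls ! j)" using bh[OF x0p(1)] x0p by simp
  have vs: "\<forall>x\<in>X N. deg M x \<in> set (snd (Ls ! j))"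
  proof
    fix x assume x: "x \<in> X N"
    then have "x \<in> dom M - H" "jj x = j" by (auto simp: X_def j_def)
    then show "deg M x \<in> set (snd (Ls ! j))" using bh by metis
  qed
  have finX: "finite (X N)" using finM by (auto simp: X_def)
  have "deg M3 N = (\<lambda>\<eta>. fst (Ls ! j) \<eta> + (\<Sum>x\<in>X N. P * deg M x \<eta>))" using deg3_fun[OF N] v0 by simp
  also have "\<dots> \<in> linset (fst (Ls ! j)) (snd (Ls ! j))"
    using linset_sum[OF finX, of "deg M" "snd (Ls ! j)" "fst (Ls ! j)" P] vs by simp
  finally show ?thesis using jl by (intro UN_I[of "Ls ! j"]) (auto simp: case_prod_beta)
qed

lemma merge_result:
  assumes "base_ok M \<gamma> cs" "H \<noteq> {}" "Ls \<noteq> []"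
  shows "finite_struc M3 \<and> sat_Psi M3 \<gamma> cs Ls"
proof
  have "C \<noteq> {}" using assms(3) by (auto simp: C_def P_def K_def)
  moreover have "finite (H \<times> C)" using finM H_sub by (auto simp: C_def intro: finite_subset)
  ultimately show "finite_struc M3" using assms(2) by (auto simp: finite_struc_def M3_def)
  show "sat_Psi M3 \<gamma> cs Ls" unfolding sat_Psi_def using base3[OF assms(1)] deg3_linset
    by (auto simp: M3_def)
qed

end

lemma merge_dir:
  fixes M :: "('a,'u,'b) struc"
  assumes fin: "finite_struc M" and sat: "sat_Psi_star M \<gamma> cs Ls"
  shows "\<exists>M3 :: ('a \<times> nat \<times> nat,'u,'b) struc. finite_struc M3 \<and> sat_Psi M3 \<gamma> cs Ls"
proof -
  define H where "H = {a \<in> dom M. \<exists>(v0, vs)\<in>set Ls. deg M a = v0}"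
  have "\<forall>a\<in>dom M - H. \<exists>p. fst p \<in> H \<and> tp1 M (fst p) = tp1 M a \<and> snd p < length Ls \<and>
          deg M a \<in> set (snd (Ls ! snd p)) \<and> deg M (fst p) = fst (Ls ! snd p)"
  proof
    fix a assume a: "a \<in> dom M - H"
    then have "\<forall>(v0, vs) \<in> set Ls. deg M a \<noteq> v0" by (auto simp: H_def)
    then obtain b where b: "b \<in> dom M" "tp1 M b = tp1 M a"
       "\<exists>(v0, vs) \<in> set Ls. deg M a \<in> set vs \<and> deg M b = v0"
      using sat a unfolding sat_Psi_star_def by blast
    then obtain v0 vs where vv: "(v0, vs) \<in> set Ls" "deg M a \<in> set vs" "deg M b = v0" by blast
    then obtain j where j: "j < length Ls" "Ls ! j = (v0, vs)" by (auto simp: in_set_conv_nth)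
    have "b \<in> H" using b vv by (auto simp: H_def)
    then show "\<exists>p. fst p \<in> H \<and> tp1 M (fst p) = tp1 M a \<and> snd p < length Ls \<and>
          deg M a \<in> set (snd (Ls ! snd p)) \<and> deg M (fst p) = fst (Ls ! snd p)"
      using b vv j by (intro exI[of _ "(b, j)"]) auto
  qed
  then have "\<exists>f. \<forall>a\<in>dom M - H. fst (f a) \<in> H \<and> tp1 M (fst (f a)) = tp1 M a \<and> snd (f a) < length Ls \<and>
          deg M a \<in> set (snd (Ls ! snd (f a))) \<and> deg M (fst (f a)) = fst (Ls ! snd (f a))"
    by (rule bchoice)
  then obtain f where f: "\<forall>a\<in>dom M - H. fst (f a) \<in> H \<and> tp1 M (fst (f a)) = tp1 M a \<and> snd (f a) < length Ls \<and>
          deg M a \<in> set (snd (Ls ! snd (f a))) \<and> deg M (fst (f a)) = fst (Ls ! snd (f a))"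
    by blast
  have finD: "finite (dom M - H)" using fin by (auto simp: finite_struc_def)
  obtain idx :: "'a \<Rightarrow> nat" and m where idx: "idx ` (dom M - H) = {i. i < m}" "inj_on idx (dom M - H)"
    using finite_imp_inj_to_nat_seg[OF finD] by blast
  interpret merge M Ls H "\<lambda>a. fst (f a)" "\<lambda>a. snd (f a)" idx m
  proof
    show "finite (dom M)" using fin by (simp add: finite_struc_def)
  next
    show "H = {a \<in> dom M. \<exists>(v0, vs)\<in>set Ls. deg M a = v0}" by (rule H_def)
  next
    fix a assume "a \<in> dom M - H"
    then show "fst (f a) \<in> H \<and> tp1 M (fst (f a)) = tp1 M a \<and> snd (f a) < length Ls \<and>
          deg M a \<in> set (snd (Ls ! snd (f a))) \<and> deg M (fst (f a)) = fst (Ls ! snd (f a))"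
      using f by blast
  next
    show "inj_on idx (dom M - H)" by (rule idx(2))
  next
    fix a assume "a \<in> dom M - H"
    then show "idx a < m" using idx(1) by blast
  qed
  obtain a where a: "a \<in> dom M" using fin by (auto simp: finite_struc_def)
  have "H \<noteq> {}"
  proof (cases "a \<in> H")
    case False then show ?thesis using f a by blast
  qed auto
  moreover have "Ls \<noteq> []" using sat a unfolding sat_Psi_star_def by auto
  moreover have "base_ok M \<gamma> cs" using sat by (simp add: sat_Psi_star_def)
  ultimately show ?thesis using merge_result by blast
qed


theorem mainTheorem13:
  fixes \<gamma> :: "('u::finite, 'b::finite) qf"
    and cs :: "('b guard \<times> ('u, 'b) qf) list"
    and Ls :: "(('b type2 \<Rightarrow> nat) \<times> ('b type2 \<Rightarrow> nat) list) list"
  assumes "qf_vars \<gamma> \<subseteq> {Vx}"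
    and "\<forall>(v0, vs) \<in> set Ls. \<forall>v \<in> insert v0 (set vs). v null2 = 0"
  shows "(\<exists>M :: (nat, 'u, 'b) struc. finite_struc M \<and> sat_Psi M \<gamma> cs Ls) \<longleftrightarrow>
         (\<exists>M :: (nat, 'u, 'b) struc. finite_struc M \<and> sat_Psi_star M \<gamma> cs Ls)"
proof
  assume "\<exists>M :: (nat, 'u, 'b) struc. finite_struc M \<and> sat_Psi M \<gamma> cs Ls"
  then obtain M :: "(nat, 'u, 'b) struc" where M: "finite_struc M" "sat_Psi M \<gamma> cs Ls" by blast
  obtain M2 :: "(nat \<times> nat, 'u, 'b) struc" where M2: "finite_struc M2" "sat_Psi_star M2 \<gamma> cs Ls"
    using split_dir[OF M assms(2)] by blast
  obtain M' :: "(nat, 'u, 'b) struc" where "finite_struc M'" "sat_Psi_star M' \<gamma> cs Ls = sat_Psi_star M2 \<gamma> cs Ls"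
    using to_nat[OF M2(1), where \<gamma>=\<gamma> and cs=cs and Ls=Ls] by blast
  then show "\<exists>M :: (nat, 'u, 'b) struc. finite_struc M \<and> sat_Psi_star M \<gamma> cs Ls" using M2 by blast
next
  assume "\<exists>M :: (nat, 'u, 'b) struc. finite_struc M \<and> sat_Psi_star M \<gamma> cs Ls"
  then obtain M :: "(nat, 'u, 'b) struc" where M: "finite_struc M" "sat_Psi_star M \<gamma> cs Ls" by blast
  obtain M3 :: "(nat \<times> nat \<times> nat, 'u, 'b) struc" where M3: "finite_struc M3" "sat_Psi M3 \<gamma> cs Ls"
    using merge_dir[OF M] by blast
  obtain M' :: "(nat, 'u, 'b) struc" where "finite_struc M'" "sat_Psi M' \<gamma> cs Ls = sat_Psi M3 \<gamma> cs Ls"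
    using to_nat[OF M3(1), where \<gamma>=\<gamma> and cs=cs and Ls=Ls] by blast
  then show "\<exists>M :: (nat, 'u, 'b) struc. finite_struc M \<and> sat_Psi M \<gamma> cs Ls" using M3 by blast
qed

end
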